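(* Fix $N\ge1$, $L>0$, $\alpha>0$. There is a lower triangular matrix $H\in\mathbb{R}^{2N\times 2N}$ such that for every $d\ge1$, every operator $\mathbb{A}\colon\mathbb{R}^d\to\mathbb{R}^d$ and every $x_0\in\mathbb{R}^d$: (i) the iterates $x_0,x_{1/2},x_1,\dots,x_N$ of the Fast Extragradient method \[ x_{k+1/2}=x_k+\tfrac{1}{k+1}(x_0-x_k)-\tfrac{k}{k+1}\alpha\mathbb{A}x_k,\qquad x_{k+1}=x_k+\tfrac{1}{k+1}(x_0-x_k)-\alpha\mathbb{A}x_{k+1/2}\quad(k=0,\dots,N-1) \] satisfy $x_{(\ell+1)/2}=x_{\ell/2}-\frac1L\sum_{i=0}^{\ell}H_{\ell+1,i+1}\,\mathbb{A}x_{i/2}$ for $\ell=0,1,\dots,2N-1$; and (ii) the iterates $x_0,x_{1/2},x_1,\dots,x_N$ of the Dual Fast Extragradient method \[ x_{k+1/2}=x_k-\alpha z_k-\alpha\mathbb{A}x_k,\quad x_{k+1}=x_{k+1/2}-\tfrac{N-k-1}{N-k}\alpha(\mathbb{A}x_{k+1/2}-\mathbb{A}x_k),\quad z_{k+1}=\tfrac{N-k-1}{N-k}z_k-\tfrac{1}{N-k}\mathbb{A}x_{k+1/2} \] ($k=0,\dots,N-1$, $z_0=0$) satisfy $x_{(\ell+1)/2}=x_{\ell/2}-\frac1L\sum_{i=0}^{\ell}(H^A)_{\ell+1,i+1}\,\mathbb{A}x_{i/2}$ for $\ell=0,\dots,2N-1$, where $(H^A)_{\ell,i}=H_{2N+1-i,\,2N+1-\ell}$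 is the anti-diagonal transpose. That is, the two methods are H-duals of each other.
   Context: Rows and columns of $2N\times2N$ matrices are indexed $1,\dots,2N$. The iterates are indexed by half-integers $\ell/2$, $\ell=0,\dots,2N$. *)

theory Defs
  imports Main "HOL.Real"
begin

text \<open>Vectors of R^d are represented as functions nat \<Rightarrow> real vanishing at indices \<ge> d
  (so that the dimension d can be quantified inside the statement, after the matrix H).\<close>

type_synonym vec = "nat \<Rightarrow> real"

definition in_Rd :: "nat \<Rightarrow> vec \<Rightarrow> bool" where
  "in_Rd d v \<longleftrightarrow> (\<forall>i\<ge>d. v i = 0)"

definition operator_on_Rd :: "nat \<Rightarrow> (vec \<Rightarrow> vec) \<Rightarrow> bool" where
  "operator_on_Rd d A \<longleftrightarrow> (\<forall>v. in_Rd d v \<longrightarrow> in_Rd d (A v))"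

definition feg_half :: "real \<Rightarrow> (vec \<Rightarrow> vec) \<Rightarrow> vec \<Rightarrow> nat \<Rightarrow> vec \<Rightarrow> vec" where
  "feg_half \<alpha> A x0 k xk = (\<lambda>j. xk j + (1 / real (k+1)) * (x0 j - xk j)
                                 - (real k / real (k+1)) * \<alpha> * A xk j)"

fun feg_x :: "real \<Rightarrow> (vec \<Rightarrow> vec) \<Rightarrow> vec \<Rightarrow> nat \<Rightarrow> vec" where
  "feg_x \<alpha> A x0 0 = x0"
| "feg_x \<alpha> A x0 (Suc k) =
     (let xk = feg_x \<alpha> A x0 k; xh = feg_half \<alpha> A x0 k xk in
      (\<lambda>j. xk j + (1 / real (k+1)) * (x0 j - xk j) - \<alpha> * A xh j))"

definition feg_iter :: "real \<Rightarrow> (vec \<Rightarrow> vec) \<Rightarrow> vec \<Rightarrow> nat \<Rightarrow> vec" where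
  "feg_iter \<alpha> A x0 l =
     (if even l then feg_x \<alpha> A x0 (l div 2)
      else feg_half \<alpha> A x0 (l div 2) (feg_x \<alpha> A x0 (l div 2)))"

definition dfeg_half :: "real \<Rightarrow> (vec \<Rightarrow> vec) \<Rightarrow> vec \<Rightarrow> vec \<Rightarrow> vec" where
  "dfeg_half \<alpha> A xk zk = (\<lambda>j. xk j - \<alpha> * zk j - \<alpha> * A xk j)"

fun dfeg_state :: "nat \<Rightarrow> real \<Rightarrow> (vec \<Rightarrow> vec) \<Rightarrow> vec \<Rightarrow> nat \<Rightarrow> vec \<times> vec" where
  "dfeg_state N \<alpha> A x0 0 = (x0, (\<lambda>j. 0))"
| "dfeg_state N \<alpha> A x0 (Suc k) =
     (let (xk, zk) = dfeg_state N \<alpha> A x0 k;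
          xh = dfeg_half \<alpha> A xk zk;
          c = real (N - k - 1) / real (N - k) in
      ((\<lambda>j. xh j - c * \<alpha> * (A xh j - A xk j)),
       (\<lambda>j. c * zk j - (1 / real (N - k)) * A xh j)))"

definition dfeg_iter :: "nat \<Rightarrow> real \<Rightarrow> (vec \<Rightarrow> vec) \<Rightarrow> vec \<Rightarrow> nat \<Rightarrow> vec" where
  "dfeg_iter N \<alpha> A x0 l =
     (let (xk, zk) = dfeg_state N \<alpha> A x0 (l div 2) in
      if even l then xk else dfeg_half \<alpha> A xk zk)"

text \<open>Matrices with rows/columns indexed 1..2N, as functions nat \<Rightarrow> nat \<Rightarrow> real.\<close>

definition lower_triangular :: "(nat \<Rightarrow> nat \<Rightarrow> real) \<Rightarrow> bool" where
  "lower_triangular H \<longleftrightarrow> (\<forall>i j. i < j \<longrightarrow> H i j = 0)"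

definition anti_transpose :: "nat \<Rightarrow> (nat \<Rightarrow> nat \<Rightarrow> real) \<Rightarrow> nat \<Rightarrow> nat \<Rightarrow> real" where
  "anti_transpose N H = (\<lambda>l i. H (2*N + 1 - i) (2*N + 1 - l))"

end

theory Submission
  imports Defs
begin

definition hh :: "nat \<Rightarrow> nat \<Rightarrow> real" where
  "hh l i = (if even l then
      (if i = l then real (l div 2) / real (l div 2 + 1)
       else if odd i \<and> i < l then - real (i div 2 + 1) / (real (l div 2) * real (l div 2 + 1))
       else 0)
    else (if i = l - 1 then - real (l div 2) / real (l div 2 + 1) else if i = l then 1 else 0))"

definition hm :: "nat \<Rightarrow> nat \<Rightarrow> real" where
  "hm r c = (if r = 0 \<or> c = 0 then 0 else hh (r - 1) (c - 1))"

lemma hh_even: "hh (2*a) i = (if i = 2*a then real a / real (a+1)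
       else if odd i \<and> i < 2*a then - real (i div 2 + 1) / (real a * real (a + 1)) else 0)"
  unfolding hh_def by simp

lemma hh_odd: "hh (2*a+1) i = (if i = 2*a then - real a / real (a+1) else if i = 2*a+1 then 1 else 0)"
  unfolding hh_def by simp

lemma hh_odd': "hh (Suc (2*a)) i = (if i = 2*a then - real a / real (a+1) else if i = Suc (2*a) then 1 else 0)"
  unfolding hh_def by simp

lemma hm_lt: "hm r c = hh (r - 1) (c - 1)" if "r \<ge> 1" "c \<ge> 1" using that unfolding hm_def by simp

lemma hm_lower: "lower_triangular hm"
  unfolding lower_triangular_def hm_def hh_def by auto

lemma sum_even: "(\<Sum>i=0..2*(k::nat). (f::nat\<Rightarrow>real) i) = (\<Sum>m<k. f (2*m) + f (2*m+1)) + (f (2*k) :: real)"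
proof (induction k)
  case 0 then show ?case by simp
next
  case (Suc k)
  have "(\<Sum>i=0..2*Suc k. f i) = (\<Sum>i=0..2*k. f i) + f (2*k+1) + f (2*k+2)"
    by (simp add: sum.atLeast0_atMost_Suc)
  then show ?case using Suc by simp
qed

lemma sum_odd: "(\<Sum>i=0..2*(k::nat)+1. (f::nat\<Rightarrow>real) i) = (\<Sum>m<Suc k. f (2*m) + f (2*m+1) :: real)"
  using sum_even[where k=k and f=f] by (simp add: sum.atLeast0_atMost_Suc)

lemma feg_iter_even: "feg_iter \<alpha> A x0 (2*k) = feg_x \<alpha> A x0 k"
  unfolding feg_iter_def by simp
lemma feg_iter_odd: "feg_iter \<alpha> A x0 (2*k+1) = feg_half \<alpha> A x0 k (feg_x \<alpha> A x0 k)"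
  unfolding feg_iter_def by simp

lemma feg_closed: "feg_x \<alpha> A x0 k j = x0 j - \<alpha> / real k *
   (\<Sum>m<k. real (m+1) * A (feg_iter \<alpha> A x0 (2*m+1)) j)"
proof (induction k)
  case 0 then show ?case by simp
next
  case (Suc k)
  define S where "S = (\<Sum>m<k. real (m+1) * A (feg_iter \<alpha> A x0 (2*m+1)) j)"
  define g where "g = A (feg_iter \<alpha> A x0 (2*k+1)) j"
  have e: "feg_x \<alpha> A x0 (Suc k) j = feg_x \<alpha> A x0 k j + (1 / real (k+1)) * (x0 j - feg_x \<alpha> A x0 k j) - \<alpha> * g"
    unfolding g_def feg_iter_odd by (simp add: Let_def)
  have s: "(\<Sum>m<Suc k. real (m+1) * A (feg_iter \<alpha> A x0 (2*m+1)) j) = S + real (k+1) * g"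
    by (simp add: S_def g_def)
  show ?case
  proof (cases "k = 0")
    case True then show ?thesis using e s S_def by simp
  next
    case False
    then show ?thesis unfolding e s using Suc.IH[folded S_def]
      by (simp add: field_simps)
  qed
qed

lemma feg_step:
  assumes "l < 2*N"
  shows "feg_iter \<alpha> A x0 (l+1) j = feg_iter \<alpha> A x0 l j
            - \<alpha> * (\<Sum>i = 0..l. hm (l+1) (i+1) * A (feg_iter \<alpha> A x0 i) j)"
proof (cases "even l")
  case True
  then obtain k where l: "l = 2*k" by blast
  define g where "g = (\<lambda>i. A (feg_iter \<alpha> A x0 i) j)"
  define S where "S = (\<Sum>m<k. real (m+1) * g (2*m+1))"
  have sum: "(\<Sum>i = 0..l. hm (l+1) (i+1) * g i) = - S / (real k * real (k+1)) + real k / real (k+1) * g (2*k)"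
  proof -
    have "(\<Sum>m<k. hm (2*k+1) (2*m+1) * g (2*m) + hm (2*k+1) (2*m+1+1) * g (2*m+1))
        = (\<Sum>m<k. - (real (m+1) * g (2*m+1)) / (real k * real (k+1)))"
      apply (rule sum.cong, simp) apply (simp add: hm_lt hh_even) by (simp add: divide_simps algebra_simps)
    also have "\<dots> = - S / (real k * real (k+1))"
      unfolding S_def by (simp add: sum_divide_distrib[symmetric] sum_negf)
    finally show ?thesis unfolding l sum_even by (simp add: hm_lt hh_even)
  qed
  have sum': "(\<Sum>i = 0..l. hm (l+1) (i+1) * A (feg_iter \<alpha> A x0 i) j) = - S / (real k * real (k+1)) + real k / real (k+1) * g (2*k)"
    using sum unfolding g_def .
  have x: "feg_x \<alpha> A x0 k j = x0 j - \<alpha> / real k * S"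
    using feg_closed[of \<alpha> A x0 k j] unfolding S_def g_def .
  have gk: "A (feg_x \<alpha> A x0 k) j = g (2*k)" unfolding g_def feg_iter_even ..
  have half: "feg_iter \<alpha> A x0 (l+1) j = feg_x \<alpha> A x0 k j + 1/real (k+1) * (x0 j - feg_x \<alpha> A x0 k j) - real k / real (k+1) * \<alpha> * g (2*k)"
    unfolding l feg_iter_odd feg_half_def gk by simp
  have alg: "xk + 1/real (k+1) * (x0j - xk) - real k / real (k+1) * \<alpha> * G = xk - \<alpha> * (- S / (real k * real (k+1)) + real k / real (k+1) * G)"
    if "xk = x0j - \<alpha> / real k * S" for xk x0j G
  proof (cases "k = 0")
    case True then show ?thesis using that by (simp add: S_def)
  next
    case False
    then have "x0j - xk = \<alpha> / real k * S" using that by simp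
    then have e: "xk + 1/real (k+1) * (x0j - xk) = xk + \<alpha> * S / (real k * real (k+1))" by simp
    show ?thesis unfolding e using False by (simp add: field_simps)
  qed
  show ?thesis
    unfolding sum' half using alg[OF x] unfolding l feg_iter_even by simp
next
  case False
  then obtain k where l: "l = 2*k+1" by (metis oddE)
  define g where "g = (\<lambda>i. A (feg_iter \<alpha> A x0 i) j)"
  have sum: "(\<Sum>i = 0..l. hm (l+1) (i+1) * g i) = - real k / real (k+1) * g (2*k) + g (2*k+1)"
  proof -
    have "(\<Sum>m<k. hm (2*k+1+1) (2*m+1) * g (2*m) + hm (2*k+1+1) (2*m+1+1) * g (2*m+1)) = 0"
      by (rule sum.neutral) (auto simp: hm_lt hh_odd')
    then show ?thesis unfolding l sum_odd by (simp add: hm_lt hh_odd')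
  qed
  have e2: "feg_iter \<alpha> A x0 (l+1) = feg_x \<alpha> A x0 (Suc k)"
    using feg_iter_even[of \<alpha> A x0 "Suc k"] l by simp
  have sum': "(\<Sum>i = 0..l. hm (l+1) (i+1) * A (feg_iter \<alpha> A x0 i) j) = - real k / real (k+1) * g (2*k) + g (2*k+1)"
    using sum unfolding g_def .
  have gk: "A (feg_x \<alpha> A x0 k) j = g (2*k)" unfolding g_def feg_iter_even ..
  have half: "feg_iter \<alpha> A x0 l j = feg_x \<alpha> A x0 k j + 1/real (k+1) * (x0 j - feg_x \<alpha> A x0 k j) - real k / real (k+1) * \<alpha> * g (2*k)"
    unfolding l feg_iter_odd feg_half_def gk by simp
  have full: "feg_x \<alpha> A x0 (Suc k) j = feg_x \<alpha> A x0 k j + 1/real (k+1) * (x0 j - feg_x \<alpha> A x0 k j) - \<alpha> * g (2*k+1)"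
    unfolding g_def feg_iter_odd by (simp add: Let_def)
  show ?thesis
    unfolding sum' e2 full half by (simp add: algebra_simps)
qed

definition hA :: "nat \<Rightarrow> nat \<Rightarrow> nat \<Rightarrow> real" where
  "hA N r c = hm (2*N+1-c) (2*N+1-r)"

lemma hA1: assumes "m \<le> k" "k < N"
  shows "hA N (2*k+1) (2*m+1) = (if m = k then 1 else 0)"
proof -
  have "hA N (2*k+1) (2*m+1) = hh (2*(N-m-1)+1) (2*(N-k-1)+1)"
    unfolding hA_def using assms by (subst hm_lt) (auto intro!: arg_cong2[where f=hh])
  then show ?thesis unfolding hh_odd using assms by auto
qed

lemma hA2: assumes "m < k" "k < N"
  shows "hA N (2*k+1) (2*m+2) = - (real N - real k) / ((real N - real m) * (real N - real m - 1))"
proof -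
  have "hA N (2*k+1) (2*m+2) = hh (2*(N-m-1)) (2*(N-k-1)+1)"
    unfolding hA_def using assms by (subst hm_lt) (auto intro!: arg_cong2[where f=hh])
  also have "\<dots> = - real (N-k-1+1) / (real (N-m-1) * real (N-m-1+1))"
    unfolding hh_even using assms by auto
  finally show ?thesis using assms by (simp add: of_nat_diff algebra_simps)
qed

lemma hA3: assumes "m \<le> k" "k < N"
  shows "hA N (2*k+2) (2*m+1) = (if m = k then - real (N-k-1) / real (N-k) else 0)"
proof -
  have "hA N (2*k+2) (2*m+1) = hh (2*(N-m-1)+1) (2*(N-k-1))"
    unfolding hA_def using assms by (subst hm_lt) (auto intro!: arg_cong2[where f=hh])
  then show ?thesis unfolding hh_odd using assms by (auto simp: Suc_diff_Suc)
qed

lemma hA4: assumes "m \<le> k" "k < N"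
  shows "hA N (2*k+2) (2*m+2) = (if m = k then real (N-k-1) / real (N-k) else 0)"
proof -
  have "hA N (2*k+2) (2*m+2) = hh (2*(N-m-1)) (2*(N-k-1))"
    unfolding hA_def using assms by (subst hm_lt) (auto intro!: arg_cong2[where f=hh])
  then show ?thesis unfolding hh_even using assms by (auto simp: Suc_diff_Suc)
qed

lemma dfeg_iter_even: "dfeg_iter N \<alpha> A x0 (2*k) = fst (dfeg_state N \<alpha> A x0 k)"
  unfolding dfeg_iter_def by (simp add: case_prod_beta)
lemma dfeg_iter_odd: "dfeg_iter N \<alpha> A x0 (2*k+1) =
   dfeg_half \<alpha> A (fst (dfeg_state N \<alpha> A x0 k)) (snd (dfeg_state N \<alpha> A x0 k))"
  unfolding dfeg_iter_def by (simp add: case_prod_beta)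

lemma dfeg_fst_suc: "fst (dfeg_state N \<alpha> A x0 (Suc k)) j =
   dfeg_iter N \<alpha> A x0 (2*k+1) j - real (N - k - 1) / real (N - k) * \<alpha> *
     (A (dfeg_iter N \<alpha> A x0 (2*k+1)) j - A (dfeg_iter N \<alpha> A x0 (2*k)) j)"
  unfolding dfeg_iter_odd dfeg_iter_even by (simp add: case_prod_beta Let_def)

lemma dfeg_snd_suc: "snd (dfeg_state N \<alpha> A x0 (Suc k)) j =
   real (N - k - 1) / real (N - k) * snd (dfeg_state N \<alpha> A x0 k) j
     - (1 / real (N - k)) * A (dfeg_iter N \<alpha> A x0 (2*k+1)) j"
  unfolding dfeg_iter_odd by (simp add: case_prod_beta Let_def)

lemma dfeg_z: "k < N \<Longrightarrow> snd (dfeg_state N \<alpha> A x0 k) j =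
   - (\<Sum>m<k. (real N - real k) / ((real N - real m) * (real N - real m - 1)) * A (dfeg_iter N \<alpha> A x0 (2*m+1)) j)"
proof (induction k)
  case 0 then show ?case by simp
next
  case (Suc k)
  define G where "G = (\<lambda>m. A (dfeg_iter N \<alpha> A x0 (2*m+1)) j)"
  have kN: "k < N" "real N - real k - 1 \<noteq> 0" "real N - real k \<noteq> 0" using Suc.prems by auto
  have c: "real (N - k - 1) / real (N - k) = (real N - real k - 1) / (real N - real k)"
    using Suc.prems by (simp add: of_nat_diff)
  have c2: "1 / real (N - k) = 1 / (real N - real k)"
    using Suc.prems by (simp add: of_nat_diff)
  have "snd (dfeg_state N \<alpha> A x0 (Suc k)) j =
     (real N - real k - 1) / (real N - real k) * (- (\<Sum>m<k. (real N - real k) / ((real N - real m) * (real N - real m - 1)) * G m))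
      - 1 / (real N - real k) * G k"
    unfolding dfeg_snd_suc c c2 Suc.IH[OF kN(1)] G_def ..
  also have "\<dots> = - (\<Sum>m<k. (real N - real k - 1) / ((real N - real m) * (real N - real m - 1)) * G m)
      - (real N - real k - 1) / ((real N - real k) * (real N - real k - 1)) * G k"
  proof -
    have t: "(real N - real k - 1) / (real N - real k) * ((real N - real k) / D * g) = (real N - real k - 1) / D * g" for D g
      using kN by simp
    have "(real N - real k - 1) / (real N - real k) * (- (\<Sum>m<k. (real N - real k) / ((real N - real m) * (real N - real m - 1)) * G m))
       = - (\<Sum>m<k. (real N - real k - 1) / ((real N - real m) * (real N - real m - 1)) * G m)"
      using kN by (simp add: sum_distrib_left t)
    moreover have "1 / (real N - real k) * G k = (real N - real k - 1) / ((real N - real k) * (real N - real k - 1)) * G k"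
      using kN by simp
    ultimately show ?thesis by simp
  qed
  also have "\<dots> = - (\<Sum>m<Suc k. (real N - real (Suc k)) / ((real N - real m) * (real N - real m - 1)) * G m)"
    by (simp add: algebra_simps)
  finally show ?case unfolding G_def .
qed

lemma negdiv: "(a - b) * g / D = - ((b - a) * g / (D::real))"
  by (metis minus_diff_eq minus_divide_left mult_minus_left)

lemma dfeg_step:
  assumes "l < 2*N"
  shows "dfeg_iter N \<alpha> A x0 (l+1) j = dfeg_iter N \<alpha> A x0 l j
            - \<alpha> * (\<Sum>i = 0..l. hA N (l+1) (i+1) * A (dfeg_iter N \<alpha> A x0 i) j)"
proof (cases "even l")
  case True
  then obtain k where l: "l = 2*k" by blast
  have kN: "k < N" using assms l by simp
  define G where "G = (\<lambda>i. A (dfeg_iter N \<alpha> A x0 i) j)"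
  have "(\<Sum>m<k. hA N (2*k+1) (2*m+1) * G (2*m) + hA N (2*k+1) (2*m+1+1) * G (2*m+1))
     = (\<Sum>m<k. - (real N - real k) / ((real N - real m) * (real N - real m - 1)) * G (2*m+1))"
  proof (rule sum.cong)
    fix m assume "m \<in> {..<k}"
    then have m: "m < k" by simp
    show "hA N (2*k+1) (2*m+1) * G (2*m) + hA N (2*k+1) (2*m+1+1) * G (2*m+1) =
       - (real N - real k) / ((real N - real m) * (real N - real m - 1)) * G (2*m+1)"
      using hA1[of m k N] hA2[of m k N] m kN by simp
  qed simp
  also have "\<dots> = snd (dfeg_state N \<alpha> A x0 k) j"
    unfolding dfeg_z[OF kN] G_def sum_negf[symmetric] by (intro sum.cong refl) (simp only: divide_minus_left mult_minus_left)
  finally have s1: "(\<Sum>m<k. hA N (2*k+1) (2*m+1) * G (2*m) + hA N (2*k+1) (2*m+1+1) * G (2*m+1))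
     = snd (dfeg_state N \<alpha> A x0 k) j" .
  have "(\<Sum>i = 0..l. hA N (l+1) (i+1) * G i) = snd (dfeg_state N \<alpha> A x0 k) j + G (2*k)"
    unfolding l sum_even s1 using hA1[of k k N] kN by simp
  then have sum: "(\<Sum>i = 0..l. hA N (l+1) (i+1) * A (dfeg_iter N \<alpha> A x0 i) j) =
      snd (dfeg_state N \<alpha> A x0 k) j + A (fst (dfeg_state N \<alpha> A x0 k)) j"
    unfolding G_def dfeg_iter_even .
  show ?thesis unfolding sum unfolding l dfeg_iter_odd dfeg_iter_even dfeg_half_def
    by (simp add: algebra_simps)
next
  case False
  then obtain k where l: "l = 2*k+1" by (metis oddE)
  have kN: "k < N" using assms l by simp
  define G where "G = (\<lambda>i. A (dfeg_iter N \<alpha> A x0 i) j)"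
  have z: "(\<Sum>m<k. hA N (2*k+2) (2*m+1) * G (2*m) + hA N (2*k+2) (2*m+1+1) * G (2*m+1)) = 0"
  proof (rule sum.neutral, rule ballI)
    fix m assume "m \<in> {..<k}"
    then have m: "m < k" by simp
    show "hA N (2*k+2) (2*m+1) * G (2*m) + hA N (2*k+2) (2*m+1+1) * G (2*m+1) = 0"
      using hA3[of m k N] hA4[of m k N] m kN by simp
  qed
  have "(\<Sum>i = 0..l. hA N (l+1) (i+1) * G i) =
     - real (N-k-1) / real (N-k) * G (2*k) + real (N-k-1) / real (N-k) * G (2*k+1)"
    unfolding l sum_odd using z hA3[of k k N] hA4[of k k N] kN by simp
  then have sum: "(\<Sum>i = 0..l. hA N (l+1) (i+1) * A (dfeg_iter N \<alpha> A x0 i) j) =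
     - real (N-k-1) / real (N-k) * A (dfeg_iter N \<alpha> A x0 (2*k)) j
     + real (N-k-1) / real (N-k) * A (dfeg_iter N \<alpha> A x0 (2*k+1)) j"
    unfolding G_def .
  have e2: "dfeg_iter N \<alpha> A x0 (l+1) = fst (dfeg_state N \<alpha> A x0 (Suc k))"
    using dfeg_iter_even[of N \<alpha> A x0 "Suc k"] l by simp
  show ?thesis unfolding sum e2 dfeg_fst_suc unfolding l
    by (simp add: algebra_simps)
qed

theorem proposition6p2:
  fixes N :: nat and L \<alpha> :: real
  assumes "N \<ge> 1" and "L > 0" and "\<alpha> > 0"
  shows "\<exists>H :: nat \<Rightarrow> nat \<Rightarrow> real. lower_triangular H \<and>
    (\<forall>d \<ge> 1. \<forall>(A :: vec \<Rightarrow> vec) (x0 :: vec). operator_on_Rd d A \<and> in_Rd d x0 \<longrightarrow>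
       (\<forall>l < 2*N. \<forall>j < d.
          feg_iter \<alpha> A x0 (l+1) j = feg_iter \<alpha> A x0 l j
            - (1/L) * (\<Sum>i = 0..l. H (l+1) (i+1) * A (feg_iter \<alpha> A x0 i) j)) \<and>
       (\<forall>l < 2*N. \<forall>j < d.
          dfeg_iter N \<alpha> A x0 (l+1) j = dfeg_iter N \<alpha> A x0 l j
            - (1/L) * (\<Sum>i = 0..l. anti_transpose N H (l+1) (i+1) * A (dfeg_iter N \<alpha> A x0 i) j)))"
proof (intro exI[where x="\<lambda>r c. L * \<alpha> * hm r c"] conjI allI impI)
  show "lower_triangular (\<lambda>r c. L * \<alpha> * hm r c)"
    using hm_lower unfolding lower_triangular_def by simp
  have sc: "(1/L) * (\<Sum>i\<in>S. L * \<alpha> * f i * g i) = \<alpha> * (\<Sum>i\<in>S. f i * g i)" for S and f g :: "nat \<Rightarrow> real"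
    using assms(2) by (simp add: sum_distrib_left algebra_simps)
  fix d l j :: nat and A :: "vec \<Rightarrow> vec" and x0 :: vec
  assume "d \<ge> 1" "operator_on_Rd d A \<and> in_Rd d x0" "l < 2*N" "j < d"
  then show "feg_iter \<alpha> A x0 (l+1) j = feg_iter \<alpha> A x0 l j
            - (1/L) * (\<Sum>i = 0..l. L * \<alpha> * hm (l+1) (i+1) * A (feg_iter \<alpha> A x0 i) j)"
    unfolding sc using feg_step by blast
next
  have sc: "(1/L) * (\<Sum>i\<in>S. L * \<alpha> * f i * g i) = \<alpha> * (\<Sum>i\<in>S. f i * g i)" for S and f g :: "nat \<Rightarrow> real"
    using assms(2) by (simp add: sum_distrib_left algebra_simps)
  fix d l j :: nat and A :: "vec \<Rightarrow> vec" and x0 :: vec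
  assume "d \<ge> 1" "operator_on_Rd d A \<and> in_Rd d x0" "l < 2*N" "j < d"
  then show "dfeg_iter N \<alpha> A x0 (l+1) j = dfeg_iter N \<alpha> A x0 l j
            - (1/L) * (\<Sum>i = 0..l. anti_transpose N (\<lambda>r c. L * \<alpha> * hm r c) (l+1) (i+1) * A (dfeg_iter N \<alpha> A x0 i) j)"
    unfolding anti_transpose_def sc hA_def[symmetric] using dfeg_step by blast
qed

end
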